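(* Let $\mathbb{X},\mathbb{Y}$ be finite-dimensional real polyhedral Banach spaces and let $T\in\mathbb{L}(\mathbb{X},\mathbb{Y})$ have rank at least $2$. Then the following are equivalent: (i) $T$ preserves parallel pairs; (ii) $T$ preserves TEA pairs; (iii) for each facet $F$ of $B_{\mathbb{X}}$ there exists $u\in F$ such that $J(Tu)\subset J(Tv)$ for all $v\in F\setminus\ker T$.
   Context: A finite-dimensional Banach space is polyhedral if its unit ball has finitely many extreme points. A face of $B_{\mathbb{X}}$ is a nonempty convex subset $F\subset S_{\mathbb{X}}$ such that whenever $x_1,x_2\in S_{\mathbb{X}}$, $0<t<1$ and $(1-t)x_1+tx_2\in F$, then $x_1,x_2\in F$; a facet is a maximal face. For non-zero $y$, $J(y)=\{g\in S_{\mathbb{Y}^*}: g(y)=\|y\|\}$. $(x,y)$ is a parallel pair if $\|x+\lambda y\|=\|x\|+\|y\|$ for some $\lambda$ with $|\lambda|=1$; a TEA pair if $\|x+y\|=\|x\|+\|y\|$. $T$ preserves parallel (resp. TEA) pairs if $(x,y)$ parallel (resp. TEA) in $\mathbb{X}$ implies $(Tx,Ty)$ parallel (resp. TEA) in $\mathbb{Y}$. *)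

theory Defs
  imports "HOL-Analysis.Analysis"
begin

definition fin_dim_space :: "'a::real_vector itself \<Rightarrow> bool" where
  "fin_dim_space _ \<longleftrightarrow> (\<exists>B::'a set. finite B \<and> span B = UNIV)"

definition polyhedral_space :: "'a::real_normed_vector itself \<Rightarrow> bool" where
  "polyhedral_space _ \<longleftrightarrow> finite {x::'a. x extreme_point_of cball 0 1}"

definition ball_face :: "'a::real_normed_vector set \<Rightarrow> bool" where
  "ball_face F \<longleftrightarrow> F \<noteq> {} \<and> convex F \<and> F \<subseteq> sphere 0 1 \<and>
     (\<forall>x1\<in>sphere 0 1. \<forall>x2\<in>sphere 0 1. \<forall>t::real. 0 < t \<and> t < 1 \<and>
        (1 - t) *\<^sub>R x1 + t *\<^sub>R x2 \<in> F \<longrightarrow> x1 \<in> F \<and> x2 \<in> F)"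

definition ball_facet :: "'a::real_normed_vector set \<Rightarrow> bool" where
  "ball_facet F \<longleftrightarrow> ball_face F \<and> (\<forall>G. ball_face G \<and> F \<subseteq> G \<longrightarrow> G = F)"

definition supp_J :: "'b::real_normed_vector \<Rightarrow> ('b \<Rightarrow> real) set" where
  "supp_J y = {g. bounded_linear g \<and> onorm g = 1 \<and> g y = norm y}"

definition parallel_pair :: "'a::real_normed_vector \<Rightarrow> 'a \<Rightarrow> bool" where
  "parallel_pair x y \<longleftrightarrow> (\<exists>c::real. \<bar>c\<bar> = 1 \<and> norm (x + c *\<^sub>R y) = norm x + norm y)"

definition tea_pair :: "'a::real_normed_vector \<Rightarrow> 'a \<Rightarrow> bool" where
  "tea_pair x y \<longleftrightarrow> norm (x + y) = norm x + norm y"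

end

theory Submission
  imports Defs
begin

lemma away_from_span:
  fixes b :: "'a::real_normed_vector"
  assumes K: "compact (span S \<inter> cball 0 (norm b + 1))" and b: "b \<notin> span S"
  shows "\<exists>d>0. \<forall>s\<in>span S. d \<le> norm (b - s)"
proof -
  let ?K = "span S \<inter> cball 0 (norm b + 1)"
  have ne: "?K \<noteq> {}" using span_zero[of S] by force
  have cl: "closed ?K" using K compact_imp_closed by blast
  have bK: "b \<notin> ?K" using b by blast
  have pos: "infdist b ?K > 0"
    using in_closed_iff_infdist_zero[OF cl ne, of b] infdist_nonneg[of b ?K] bK by linarith
  define d where "d = min 1 (infdist b ?K)"
  show ?thesis
  proof (intro exI[of _ d] conjI ballI)
    show "d > 0" using pos by (simp add: d_def)
    fix s assume s: "s \<in> span S"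
    show "d \<le> norm (b - s)"
    proof (cases "norm s \<le> norm b + 1")
      case True
      then have "s \<in> ?K" using s by simp
      then have "infdist b ?K \<le> dist b s" by (rule infdist_le)
      then show ?thesis by (simp add: d_def dist_norm)
    next
      case False
      have "norm s - norm b \<le> norm (s - b)" by (rule norm_triangle_ineq2)
      then have "norm s - norm b \<le> norm (b - s)" by (simp add: norm_minus_commute)
      then show ?thesis using False by (simp add: d_def)
    qed
  qed
qed

lemma fd_compact:
  fixes S :: "'a::real_normed_vector set"
  assumes "finite S"
  shows "compact (span S \<inter> cball 0 r)"
  using assms
proof (induction S arbitrary: r rule: finite_induct)
  case empty
  have "span {} \<inter> cball (0::'a) r \<subseteq> {0}" by auto
  then show ?case using finite_subset finite_imp_compact by blast
next
  case (insert b S)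
  show ?case
  proof (cases "b \<in> span S")
    case True
    then show ?thesis using insert.IH by (simp add: span_redundant)
  next
    case False
    obtain d where d: "d > 0" "\<And>s. s \<in> span S \<Longrightarrow> d \<le> norm (b - s)"
      using away_from_span[OF insert.IH False] by blast
    define R where "R = r + (r/d) * norm b"
    define K1 where "K1 = (\<lambda>p. fst p + snd p *\<^sub>R b) ` ((span S \<inter> cball 0 R) \<times> {-(r/d)..r/d})"
    have cK1: "compact K1" unfolding K1_def
      by (intro compact_continuous_image compact_Times insert.IH compact_Icc continuous_intros)
    have "span (insert b S) \<inter> cball 0 r = K1 \<inter> cball 0 r"
    proof
      have "span S \<subseteq> span (insert b S)" by (rule span_mono) auto
      moreover have "b \<in> span (insert b S)" by (rule span_base) auto
      ultimately show "K1 \<inter> cball 0 r \<subseteq> span (insert b S) \<inter> cball 0 r"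
        unfolding K1_def by (auto intro!: span_add span_scale)
    next
      show "span (insert b S) \<inter> cball 0 r \<subseteq> K1 \<inter> cball 0 r"
      proof
        fix x assume x: "x \<in> span (insert b S) \<inter> cball 0 r"
        then obtain k where k: "x - k *\<^sub>R b \<in> span S" using span_insert[of b S] by auto
        define s where "s = x - k *\<^sub>R b"
        have xr: "norm x \<le> r" using x by simp
        have kb: "\<bar>k\<bar> \<le> r / d"
        proof (cases "k = 0")
          case True
          have "0 \<le> r" using xr norm_ge_zero[of x] by linarith
          then show ?thesis using True d(1) by simp
        next
          case False
          have "- (1/k) *\<^sub>R s \<in> span S" using k s_def span_scale[of "s" S "- (1/k)"] by simp
          then have "d \<le> norm (b - (- (1/k) *\<^sub>R s))" by (rule d(2))
          also have "b - (- (1/k) *\<^sub>R s) = (1/k) *\<^sub>R x"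
            using False by (simp add: s_def algebra_simps)
          also have "norm ((1/k) *\<^sub>R x) = norm x / \<bar>k\<bar>" by simp
          finally have "d * \<bar>k\<bar> \<le> norm x" using False by (simp add: field_simps)
          then have "\<bar>k\<bar> * d \<le> r" using xr by (simp add: mult.commute)
          then show ?thesis using d(1) by (simp add: field_simps)
        qed
        have "norm s \<le> norm x + norm (k *\<^sub>R b)" unfolding s_def by (rule norm_triangle_ineq4)
        also have "\<dots> \<le> r + (r/d) * norm b" proof -
          have "\<bar>k\<bar> * norm b \<le> (r/d) * norm b" using mult_right_mono[OF kb norm_ge_zero[of b]] by simp
          then show ?thesis using xr by simp
        qed
        finally have sR: "norm s \<le> R" by (simp add: R_def)
        have "x = fst (s, k) + snd (s, k) *\<^sub>R b" by (simp add: s_def)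
        moreover have "(s, k) \<in> (span S \<inter> cball 0 R) \<times> {-(r/d)..r/d}"
          using k sR kb by (auto simp: s_def)
        ultimately have "x \<in> K1" unfolding K1_def by blast
        then show "x \<in> K1 \<inter> cball 0 r" using x by blast
      qed
    qed
    then show ?thesis using cK1 by (simp add: compact_Int_closed)
  qed
qed

lemma fin_dim_basis:
  assumes "fin_dim_space TYPE('a)"
  obtains B :: "'a::real_normed_vector set" where "finite B" "independent B" "span B = UNIV"
proof -
  obtain S :: "'a set" where S: "finite S" "span S = UNIV" using assms unfolding fin_dim_space_def by blast
  obtain B where B: "B \<subseteq> S" "independent B" "S \<subseteq> span B" using maximal_independent_subset[of S] by blast
  have "finite B" using B S finite_subset by blast
  moreover have "span B = UNIV" using B S by (metis span_mono span_span top.extremum_uniqueI)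
  ultimately show ?thesis using B that by blast
qed

lemma fin_dim_compact_cball:
  assumes "fin_dim_space TYPE('a::real_normed_vector)"
  shows "compact (cball (0::'a) r)"
proof -
  obtain B :: "'a set" where "finite B" "span B = UNIV" using fin_dim_basis[OF assms] by blast
  then show ?thesis using fd_compact[of B r] by simp
qed

lemma fin_dim_finite_span:
  assumes "fin_dim_space TYPE('a)"
  obtains B :: "'a::real_normed_vector set" where "finite B" "independent B" "B \<subseteq> V" "V \<subseteq> span B"
proof -
  obtain S :: "'a set" where S: "finite S" "span S = UNIV" using assms unfolding fin_dim_space_def by blast
  obtain B where B: "B \<subseteq> V" "independent B" "V \<subseteq> span B" using maximal_independent_subset[of V] by blast
  have "finite B" using independent_span_bound[OF S(1) B(2)] S(2) by blast
  then show ?thesis using B that by blast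
qed

lemma fin_dim_linear_bound:
  fixes f :: "'a::real_normed_vector \<Rightarrow> real"
  assumes fd: "fin_dim_space TYPE('a)" and lf: "linear f"
  shows "\<exists>C. \<forall>x. \<bar>f x\<bar> \<le> C * norm x"
proof (cases "\<forall>x. f x = 0")
  case True then show ?thesis by (intro exI[of _ 0]) simp
next
  case False
  then obtain a0 where a0: "f a0 \<noteq> 0" by blast
  define a where "a = (1 / f a0) *\<^sub>R a0"
  have fa: "f a = 1" using a0 by (simp add: a_def linear_scale[OF lf])
  obtain K where K: "finite K" "independent K" "K \<subseteq> {x. f x = 0}" "{x. f x = 0} \<subseteq> span K"
    using fin_dim_finite_span[OF fd] by blast
  have spK: "span K \<subseteq> {x. f x = 0}"
  proof
    fix x assume "x \<in> span K"
    then show "x \<in> {x. f x = 0}"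
      using linear_eq_on_span[OF lf linear_zero, of K x] K(3) by auto
  qed
  have aK: "a \<notin> span K" using spK fa by auto
  obtain d where d: "d > 0" "\<And>s. s \<in> span K \<Longrightarrow> d \<le> norm (a - s)"
    using away_from_span[OF fd_compact[OF K(1)] aK] by blast
  show ?thesis
  proof (intro exI[of _ "1/d"] allI)
    fix x
    show "\<bar>f x\<bar> \<le> 1 / d * norm x"
    proof (cases "f x = 0")
      case True then show ?thesis using d by simp
    next
      case False
      have "f (a - (1 / f x) *\<^sub>R x) = 0"
        using False fa by (simp add: linear_diff[OF lf] linear_scale[OF lf])
      then have "a - (1 / f x) *\<^sub>R x \<in> span K" using K(4) by blast
      then have "d \<le> norm (a - (a - (1 / f x) *\<^sub>R x))" by (rule d(2))
      also have "\<dots> = norm x / \<bar>f x\<bar>" by simp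
      finally have "d * \<bar>f x\<bar> \<le> norm x" using False by (simp add: field_simps)
      then show ?thesis using d(1) by (simp add: field_simps mult.commute)
    qed
  qed
qed

lemma fin_dim_linear_bounded:
  fixes f :: "'a::real_normed_vector \<Rightarrow> real"
  assumes fd: "fin_dim_space TYPE('a)" and lf: "linear f"
  shows "bounded_linear f"
proof -
  obtain C where C: "\<And>x. \<bar>f x\<bar> \<le> C * norm x" using fin_dim_linear_bound[OF fd lf] by blast
  show ?thesis
    by (rule bounded_linear_intro[of f C]) (auto simp: linear_add[OF lf] linear_scale[OF lf] C mult.commute)
qed

lemma ext_functional:
  fixes x :: "'a::real_vector"
  assumes "x \<notin> span S"
  shows "\<exists>\<phi>::'a\<Rightarrow>real. linear \<phi> \<and> (\<forall>v\<in>span S. \<phi> v = 0) \<and> \<phi> x = 1"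
proof -
  obtain B where B: "B \<subseteq> S" "independent B" "S \<subseteq> span B" using maximal_independent_subset[of S] by blast
  have spB: "span B = span S" using B by (metis span_mono span_span subset_antisym)
  have xB: "x \<notin> span B" using assms spB by simp
  have ind: "independent (insert x B)" using independent_insertI[OF xB B(2)] .
  obtain \<phi> :: "'a \<Rightarrow> real" where phi: "linear \<phi>" "\<forall>v\<in>insert x B. \<phi> v = (if v = x then 1 else 0)"
    using linear_independent_extend[OF ind, of "\<lambda>v. if v = x then 1 else 0"] by blast
  have xnB: "x \<notin> B" using xB span_base by blast
  have "\<forall>v\<in>span S. \<phi> v = 0"
  proof
    fix v assume "v \<in> span S"
    then have "v \<in> span B" using spB by simp
    have "\<forall>w\<in>B. \<phi> w = 0" using phi(2) xnB by auto
    then show "\<phi> v = 0"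
      using linear_eq_on_span[OF phi(1) linear_zero, of B v] \<open>v \<in> span B\<close> by auto
  qed
  then show ?thesis using phi by auto
qed

lemma hb_step:
  fixes f :: "'a::real_normed_vector \<Rightarrow> real"
  assumes lf: "linear f" and bnd: "\<forall>m\<in>span S. f m \<le> norm m" and x: "x \<notin> span S"
  shows "\<exists>f'. linear f' \<and> (\<forall>m\<in>span S. f' m = f m) \<and> (\<forall>v\<in>span (insert x S). f' v \<le> norm v)"
proof -
  obtain \<phi> :: "'a \<Rightarrow> real" where phi: "linear \<phi>" "\<forall>v\<in>span S. \<phi> v = 0" "\<phi> x = 1"
    using ext_functional[OF x] by blast
  define A where "A = {f m - norm (m - x) | m. m \<in> span S}"
  have key: "f m - norm (m - x) \<le> norm (m' + x) - f m'" if "m \<in> span S" "m' \<in> span S" for m m'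
  proof -
    have "f m + f m' = f (m + m')" by (simp add: linear_add[OF lf])
    also have "\<dots> \<le> norm (m + m')" using bnd that by (simp add: span_add)
    also have "m + m' = (m - x) + (m' + x)" by simp
    also have "norm \<dots> \<le> norm (m - x) + norm (m' + x)" by (rule norm_triangle_ineq)
    finally show ?thesis by simp
  qed
  have Ane: "A \<noteq> {}" unfolding A_def using span_zero[of S] by blast
  have Abdd: "bdd_above A" unfolding A_def bdd_above_def using key[OF _ span_zero[of S]] by auto
  define c where "c = Sup A"
  have c_low: "f m - norm (m - x) \<le> c" if "m \<in> span S" for m
    unfolding c_def by (rule cSup_upper[OF _ Abdd]) (use that A_def in blast)
  have c_up: "c \<le> norm (m' + x) - f m'" if "m' \<in> span S" for m'
    unfolding c_def by (rule cSup_least[OF Ane]) (use key that A_def in blast)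
  define f' where "f' = (\<lambda>v. f v + (c - f x) * \<phi> v)"
  have lf': "linear f'" unfolding f'_def
    by (intro linearI) (simp_all add: linear_add[OF lf] linear_add[OF phi(1)] linear_scale[OF lf] linear_scale[OF phi(1)] algebra_simps)
  have eqS: "\<forall>m\<in>span S. f' m = f m" using phi(2) by (simp add: f'_def)
  have "\<forall>v\<in>span (insert x S). f' v \<le> norm v"
  proof
    fix v assume "v \<in> span (insert x S)"
    then obtain k where k: "v - k *\<^sub>R x \<in> span S" using span_insert[of x S] by auto
    define m where "m = v - k *\<^sub>R x"
    have v: "v = m + k *\<^sub>R x" by (simp add: m_def)
    have m: "m \<in> span S" using k m_def by simp
    have fv: "f' v = f m + k * c"
      unfolding v f'_def using phi m
      by (simp add: linear_add[OF lf] linear_add[OF phi(1)] linear_scale[OF lf] linear_scale[OF phi(1)] algebra_simps)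
    consider "k > 0" | "k < 0" | "k = 0" by linarith
    then show "f' v \<le> norm v"
    proof cases
      case 1
      have mk: "(1/k) *\<^sub>R m \<in> span S" using m by (simp add: span_scale)
      have "c \<le> norm ((1/k) *\<^sub>R m + x) - f ((1/k) *\<^sub>R m)" by (rule c_up[OF mk])
      also have "(1/k) *\<^sub>R m + x = (1/k) *\<^sub>R v" using 1 by (simp add: v algebra_simps)
      also have "f ((1/k) *\<^sub>R m) = f m / k" by (simp add: linear_scale[OF lf])
      finally have "c \<le> norm v / k - f m / k" using 1 by simp
      then have "k * c \<le> norm v - f m" using 1 by (simp add: field_simps)
      then show ?thesis using fv by simp
    next
      case 2
      define s where "s = - k"
      have s: "s > 0" using 2 s_def by simp
      have ms: "(1/s) *\<^sub>R m \<in> span S" using m by (simp add: span_scale)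
      have "f ((1/s) *\<^sub>R m) - norm ((1/s) *\<^sub>R m - x) \<le> c" by (rule c_low[OF ms])
      also have "(1/s) *\<^sub>R m - x = (1/s) *\<^sub>R v" using s by (simp add: v s_def algebra_simps)
      also have "f ((1/s) *\<^sub>R m) = f m / s" by (simp add: linear_scale[OF lf])
      finally have "f m / s - norm v / s \<le> c" using s by simp
      then have "f m - norm v \<le> s * c" using s by (simp add: field_simps)
      then show ?thesis using fv s_def by simp
    next
      case 3
      then show ?thesis using fv bnd m v by simp
    qed
  qed
  then show ?thesis using lf' eqS by blast
qed

lemma hb_finite:
  fixes y :: "'a::real_normed_vector"
  assumes "finite S"
  shows "\<exists>g. linear g \<and> g y = norm y \<and> (\<forall>v\<in>span (insert y S). g v \<le> norm v)"
  using assms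
proof (induction S rule: finite_induct)
  case empty
  show ?case
  proof (cases "y = 0")
    case True
    then show ?thesis by (intro exI[of _ "\<lambda>_. 0"]) (auto simp: linear_zero)
  next
    case False
    then have "y \<notin> span {}" by simp
    then obtain \<phi> :: "'a \<Rightarrow> real" where phi: "linear \<phi>" "\<phi> y = 1" using ext_functional by blast
    define g where "g = (\<lambda>v. norm y * \<phi> v)"
    have lg: "linear g" unfolding g_def
      by (intro linearI) (simp_all add: linear_add[OF phi(1)] linear_scale[OF phi(1)] algebra_simps)
    have "\<forall>v\<in>span {y}. g v \<le> norm v"
    proof
      fix v assume "v \<in> span {y}"
      then obtain k where "v = k *\<^sub>R y" by (auto simp: span_singleton)
      then show "g v \<le> norm v" using phi mult_right_mono[OF abs_ge_self[of k] norm_ge_zero[of y]]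
        by (simp add: g_def linear_scale[OF phi(1)] mult.commute)
    qed
    then show ?thesis using lg phi by (auto simp: g_def)
  qed
next
  case (insert b S)
  obtain g where g: "linear g" "g y = norm y" "\<forall>v\<in>span (insert y S). g v \<le> norm v" using insert.IH by blast
  show ?case
  proof (cases "b \<in> span (insert y S)")
    case True
    then have "span (insert y (insert b S)) = span (insert y S)"
      by (metis insert_commute span_redundant)
    then show ?thesis using g by auto
  next
    case False
    obtain f' where f': "linear f'" "\<forall>m\<in>span (insert y S). f' m = g m"
      "\<forall>v\<in>span (insert b (insert y S)). f' v \<le> norm v"
      using hb_step[OF g(1) g(3) False] by blast
    have "f' y = norm y" using f'(2) g(2) span_base[of y "insert y S"] by auto
    then show ?thesis using f' by (metis insert_commute)
  qed
qed

theorem hahn_banach_fd: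
  fixes y :: "'a::real_normed_vector"
  assumes fd: "fin_dim_space TYPE('a)"
  shows "\<exists>g. linear g \<and> g y = norm y \<and> (\<forall>x. \<bar>g x\<bar> \<le> norm x)"
proof -
  obtain S :: "'a set" where S: "finite S" "span S = UNIV" using fd unfolding fin_dim_space_def by blast
  obtain g where g: "linear g" "g y = norm y" "\<forall>v\<in>span (insert y S). g v \<le> norm v"
    using hb_finite[OF S(1)] by blast
  have sp: "span (insert y S) = UNIV" using S(2) span_mono[of S "insert y S"] by auto
  have "\<bar>g x\<bar> \<le> norm x" for x
  proof -
    have "g x \<le> norm x" using g(3) sp by auto
    moreover have "g (-x) \<le> norm (-x)" using g(3) sp by (metis UNIV_I)
    ultimately show ?thesis using linear_neg[OF g(1), of x] by auto
  qed
  then show ?thesis using g by blast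
qed

lemma functional_in_J:
  fixes g :: "'a::real_normed_vector \<Rightarrow> real"
  assumes lg: "linear g" and bnd: "\<And>x. \<bar>g x\<bar> \<le> norm x" and y: "y \<noteq> 0" and gy: "g y = norm y"
  shows "g \<in> supp_J y"
proof -
  have bl: "bounded_linear g"
    by (rule bounded_linear_intro[of g 1]) (auto simp: linear_add[OF lg] linear_scale[OF lg] bnd)
  have le: "onorm g \<le> 1" by (rule onorm_bound) (auto simp: bnd)
  have "norm (g y) \<le> onorm g * norm y" by (rule onorm[OF bl])
  then have "norm y \<le> onorm g * norm y" using gy by simp
  then have "1 \<le> onorm g" using y by simp
  then show ?thesis using le bl gy unfolding supp_J_def by auto
qed

lemma J_props:
  assumes "g \<in> supp_J y"
  shows "linear g" "\<And>x. \<bar>g x\<bar> \<le> norm x" "g y = norm y"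
proof -
  have bl: "bounded_linear g" and o: "onorm g = 1" and gy: "g y = norm y"
    using assms unfolding supp_J_def by auto
  show "linear g" using bl bounded_linear.linear by blast
  show "\<bar>g x\<bar> \<le> norm x" for x using onorm[OF bl, of x] o by simp
  show "g y = norm y" by fact
qed

theorem hb_J:
  fixes y :: "'a::real_normed_vector"
  assumes fd: "fin_dim_space TYPE('a)" and y: "y \<noteq> 0"
  shows "\<exists>g. g \<in> supp_J y"
  using hahn_banach_fd[OF fd, of y] functional_in_J y by blast

lemma tea_scale:
  fixes x y :: "'a::real_normed_vector"
  assumes t: "tea_pair x y" and a: "0 \<le> a" and b: "0 \<le> b"
  shows "tea_pair (a *\<^sub>R x) (b *\<^sub>R y)"
proof -
  have t': "norm (x + y) = norm x + norm y" using t unfolding tea_pair_def .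
  have "a * norm x + b * norm y \<le> norm (a *\<^sub>R x + b *\<^sub>R y)"
  proof (cases "b \<le> a")
    case True
    have "a *\<^sub>R x + b *\<^sub>R y = a *\<^sub>R (x + y) - (a - b) *\<^sub>R y" by (simp add: algebra_simps)
    then have "norm (a *\<^sub>R (x + y)) - norm ((a - b) *\<^sub>R y) \<le> norm (a *\<^sub>R x + b *\<^sub>R y)"
      by (metis norm_triangle_ineq2)
    moreover have "norm (a *\<^sub>R (x + y)) = a * norm x + a * norm y"
      by (simp only: norm_scaleR abs_of_nonneg[OF a] t' distrib_left)
    moreover have "norm ((a - b) *\<^sub>R y) = (a - b) * norm y" using True by simp
    ultimately show ?thesis by (simp add: algebra_simps)
  next
    case False
    have "a *\<^sub>R x + b *\<^sub>R y = b *\<^sub>R (x + y) - (b - a) *\<^sub>R x" by (simp add: algebra_simps)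
    then have "norm (b *\<^sub>R (x + y)) - norm ((b - a) *\<^sub>R x) \<le> norm (a *\<^sub>R x + b *\<^sub>R y)"
      by (metis norm_triangle_ineq2)
    moreover have "norm (b *\<^sub>R (x + y)) = b * norm x + b * norm y"
      by (simp only: norm_scaleR abs_of_nonneg[OF b] t' distrib_left)
    moreover have "norm ((b - a) *\<^sub>R x) = (b - a) * norm x" using False by simp
    ultimately show ?thesis by (simp add: algebra_simps)
  qed
  moreover have "norm (a *\<^sub>R x + b *\<^sub>R y) \<le> a * norm x + b * norm y"
    using norm_triangle_ineq[of "a *\<^sub>R x" "b *\<^sub>R y"] a b by simp
  ultimately show ?thesis unfolding tea_pair_def using a b by simp
qed

lemma tea_norming:
  fixes a b :: "'a::real_normed_vector"
  assumes fd: "fin_dim_space TYPE('a)" and t: "tea_pair a b"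
  shows "\<exists>g. linear g \<and> (\<forall>x. \<bar>g x\<bar> \<le> norm x) \<and> g a = norm a \<and> g b = norm b"
proof -
  obtain g where g: "linear g" "g (a + b) = norm (a + b)" "\<forall>x. \<bar>g x\<bar> \<le> norm x"
    using hahn_banach_fd[OF fd] by blast
  have "g a + g b = norm a + norm b" using g t unfolding tea_pair_def by (simp add: linear_add)
  moreover have "g a \<le> norm a" "g b \<le> norm b" using g(3) abs_le_D1 by blast+
  ultimately show ?thesis using g by (intro exI[of _ g]) auto
qed

lemma seg_param:
  fixes y z :: "'a::real_normed_vector"
  shows "0 \<le> t \<Longrightarrow> t \<le> 1 \<Longrightarrow> y + t *\<^sub>R (z - y) \<in> closed_segment y z"
  unfolding in_segment by (intro exI[of _ t]) (auto simp: algebra_simps)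

theorem KL:
  fixes y z :: "'b::real_normed_vector"
  assumes fd: "fin_dim_space TYPE('b)"
    and z0: "0 \<notin> closed_segment y z"
    and par: "\<forall>p\<in>closed_segment y z. \<forall>q\<in>closed_segment y z. parallel_pair p q"
  shows "tea_pair y z"
proof (cases "z = y")
  case True
  have "y + y = 2 *\<^sub>R y" by (simp add: scaleR_2)
  then show ?thesis using True unfolding tea_pair_def by simp
next
  case False
  define p where "p = (\<lambda>t::real. y + t *\<^sub>R (z - y))"
  define N where "N = (\<lambda>t. norm (p t))"
  have pseg: "p t \<in> closed_segment y z" if "0 \<le> t" "t \<le> 1" for t
    unfolding p_def using seg_param that by blast
  obtain s0 where s0: "s0 \<in> closed_segment y z" "\<forall>t\<in>closed_segment y z. norm s0 \<le> norm t"
    using continuous_attains_inf[OF compact_segment, of y z norm] by (auto intro: continuous_intros)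
  define m where "m = norm s0"
  have m: "m > 0" using s0 z0 m_def by (metis zero_less_norm_iff)
  have Nm: "m \<le> N t" if "0 \<le> t" "t \<le> 1" for t using s0 pseg[OF that] by (simp add: m_def N_def)
  define D where "D = norm (z - y)"
  have D: "D > 0" using False by (simp add: D_def)
  obtain n :: nat where n: "D / m < real n" using reals_Archimedean2 by blast
  have npos: "real n > 0" using n D m by (smt (verit) divide_pos_pos)
  have Dn: "D < m * real n" using n m by (simp add: field_simps)
  have close: "tea_pair (p s) (p t)"
    if "0 \<le> s" "s \<le> 1" "0 \<le> t" "t \<le> 1" "\<bar>s - t\<bar> \<le> 2 / real n" for s t
  proof -
    have ps: "p s \<in> closed_segment y z" by (rule pseg) (use that in auto)
    have pt: "p t \<in> closed_segment y z" by (rule pseg) (use that in auto)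
    have "parallel_pair (p s) (p t)" using par ps pt by blast
    then obtain c :: real where c: "\<bar>c\<bar> = 1" "norm (p s + c *\<^sub>R p t) = norm (p s) + norm (p t)"
      unfolding parallel_pair_def by blast
    show ?thesis
    proof (cases "c = 1")
      case True then show ?thesis using c unfolding tea_pair_def by simp
    next
      case False
      then have cm: "c = -1" using c(1) by (auto simp: abs_if split: if_split_asm)
      have "p s - p t = (s - t) *\<^sub>R (z - y)" by (simp add: p_def algebra_simps)
      then have "norm (p s - p t) = \<bar>s - t\<bar> * D" by (simp add: D_def)
      also have "\<dots> \<le> 2 / real n * D" by (rule mult_right_mono) (use that(5) D in auto)
      also have "\<dots> = (2 * D) / real n" by simp
      also have "\<dots> < 2 * m"
      proof -
        have "2 * D < (2 * m) * real n" using Dn by simp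
        then show ?thesis using npos by (simp add: pos_divide_less_eq)
      qed
      finally have "norm (p s - p t) < 2 * m" .
      moreover have "norm (p s - p t) = N s + N t" using c(2) cm by (simp add: N_def)
      moreover have "m \<le> N s" "m \<le> N t" using Nm that by auto
      ultimately show ?thesis by linarith
    qed
  qed
  have affine: "g (p t) = g y + t * g (z - y)" if "linear g" for g :: "'b \<Rightarrow> real" and t
    by (simp add: p_def linear_add[OF that] linear_scale[OF that])
  have mid: "g (p t) = N t"
    if lg: "linear g" and bd: "\<forall>x. \<bar>g x\<bar> \<le> norm x" and ga: "g (p a) = N a" and gb: "g (p b) = N b"
      and ta: "a \<le> t" and tb: "t \<le> b" for g :: "'b \<Rightarrow> real" and a b t
  proof (cases "a = b")
    case True then show ?thesis using ga ta tb by simp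
  next
    case False
    define l where "l = (t - a) / (b - a)"
    have ab: "a < b" using False ta tb by simp
    have l0: "0 \<le> l" "l \<le> 1" using ab ta tb by (auto simp: l_def field_simps)
    have lba: "l * (b - a) = t - a" using ab by (simp add: l_def)
    have pt: "p t = (1 - l) *\<^sub>R p a + l *\<^sub>R p b"
    proof -
      have "(1 - l) *\<^sub>R p a + l *\<^sub>R p b = y + (a + l * (b - a)) *\<^sub>R (z - y)"
        by (simp add: p_def algebra_simps)
      also have "a + l * (b - a) = t" using lba by simp
      finally show ?thesis by (simp add: p_def)
    qed
    have "g (p t) = (1 - l) * N a + l * N b"
      using ga gb by (simp add: pt linear_add[OF lg] linear_scale[OF lg])
    moreover have "N t \<le> (1 - l) * N a + l * N b"
    proof -
      have "N t \<le> norm ((1 - l) *\<^sub>R p a) + norm (l *\<^sub>R p b)"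
        unfolding N_def pt by (rule norm_triangle_ineq)
      then show ?thesis using l0 by (simp add: N_def)
    qed
    moreover have "g (p t) \<le> N t" using abs_le_D1[OF spec[OF bd, of "p t"]] by (simp add: N_def)
    ultimately show ?thesis by linarith
  qed
  have Q: "\<exists>g. linear g \<and> (\<forall>x. \<bar>g x\<bar> \<le> norm x) \<and> g (p 0) = N 0 \<and> g (p (real k / real n)) = N (real k / real n)"
    if "1 \<le> k" "k \<le> n" for k
    using that
  proof (induction k)
    case 0 then show ?case by simp
  next
    case (Suc k)
    show ?case
    proof (cases "k = 0")
      case True
      have "tea_pair (p 0) (p (1 / real n))"
        by (rule close) (use npos Suc.prems in \<open>auto simp: field_simps\<close>)
      then obtain g where "linear g" "\<forall>x. \<bar>g x\<bar> \<le> norm x" "g (p 0) = N 0" "g (p (1 / real n)) = N (1 / real n)"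
        using tea_norming[OF fd] unfolding N_def by blast
      then show ?thesis using True by auto
    next
      case False
      obtain g where g: "linear g" "\<forall>x. \<bar>g x\<bar> \<le> norm x" "g (p 0) = N 0" "g (p (real k / real n)) = N (real k / real n)"
        using Suc.IH Suc.prems False by auto
      define t0 where "t0 = (real k - 1) / real n"
      define t1 where "t1 = real k / real n"
      define t2 where "t2 = (real k + 1) / real n"
      have k1: "1 \<le> real k" using False by simp
      have kn: "real k + 1 \<le> real n" using Suc.prems by simp
      have t0: "0 \<le> t0" "t0 \<le> 1" using k1 kn npos by (auto simp: t0_def field_simps)
      have t2: "0 \<le> t2" "t2 \<le> 1" using k1 kn npos by (auto simp: t2_def field_simps)
      have d02: "\<bar>t0 - t2\<bar> \<le> 2 / real n" using npos by (simp add: t0_def t2_def field_simps)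
      have "tea_pair (p t0) (p t2)" by (rule close) (use t0 t2 d02 in auto)
      then obtain h where h: "linear h" "\<forall>x. \<bar>h x\<bar> \<le> norm x" "h (p t0) = N t0" "h (p t2) = N t2"
        using tea_norming[OF fd] unfolding N_def by blast
      have "t0 \<le> t1" "t1 \<le> t2" using npos by (auto simp: t0_def t1_def t2_def field_simps)
      then have ht1: "h (p t1) = N t1" using mid[OF h] by blast
      have gt0: "g (p t0) = N t0"
        using mid[OF g(1,2,3) g(4)[folded t1_def], of t0] t0 \<open>t0 \<le> t1\<close> by blast
      have gt1: "g (p t1) = N t1" using g(4) t1_def by simp
      have e0: "g y + t0 * g (z - y) = h y + t0 * h (z - y)"
        using gt0 h(3) affine[OF g(1), of t0] affine[OF h(1), of t0] by simp
      have e1: "g y + t1 * g (z - y) = h y + t1 * h (z - y)"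
        using gt1 ht1 affine[OF g(1), of t1] affine[OF h(1), of t1] by simp
      have "(t1 - t0) * (g (z - y) - h (z - y)) = 0" using e0 e1 by (simp add: algebra_simps)
      moreover have "t1 - t0 \<noteq> 0" using npos by (simp add: t0_def t1_def field_simps)
      ultimately have G: "g (z - y) = h (z - y)" by simp
      then have "g y = h y" using e1 by simp
      then have "g (p t2) = h (p t2)" using G affine[OF g(1), of t2] affine[OF h(1), of t2] by simp
      then have "g (p t2) = N t2" using h(4) by simp
      moreover have "real (Suc k) / real n = t2" by (simp add: t2_def)
      ultimately show ?thesis using g by auto
    qed
  qed
  have n1: "1 \<le> n" using npos by simp
  obtain g where g: "linear g" "\<forall>x. \<bar>g x\<bar> \<le> norm x" "g (p 0) = N 0" "g (p (real n / real n)) = N (real n / real n)"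
    using Q[OF n1 order.refl] by blast
  have gy: "g y = norm y" using g(3) by (simp add: p_def N_def)
  have gz: "g z = norm z" using g(4) npos by (simp add: p_def N_def)
  have "g (y + z) \<le> norm (y + z)" using g(2) abs_le_D1 by blast
  then have "norm y + norm z \<le> norm (y + z)"
    using gy gz linear_add[OF g(1), of y z] by simp
  then show ?thesis unfolding tea_pair_def using norm_triangle_ineq[of y z] by simp
qed

lemma comb_eq_max:
  fixes a b M t :: real
  assumes "0 < t" "t < 1" "a \<le> M" "b \<le> M" "(1 - t) * a + t * b = M"
  shows "a = M \<and> b = M"
proof (rule ccontr)
  assume "\<not> (a = M \<and> b = M)"
  then have "a < M \<or> b < M" using assms by linarith
  then have "(1 - t) * a + t * b < (1 - t) * M + t * M"
  proof
    assume "a < M"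
    then have "(1 - t) * a < (1 - t) * M" using assms by (simp add: mult_strict_left_mono)
    moreover have "t * b \<le> t * M" using assms by (simp add: mult_left_mono)
    ultimately show ?thesis by linarith
  next
    assume "b < M"
    then have "t * b < t * M" using assms by (simp add: mult_strict_left_mono)
    moreover have "(1 - t) * a \<le> (1 - t) * M" using assms by (simp add: mult_left_mono)
    ultimately show ?thesis by linarith
  qed
  then show False using assms by (simp add: algebra_simps)
qed

lemma face_pairs_tea:
  assumes F: "ball_face F" and p: "p \<in> F" and q: "q \<in> F"
  shows "tea_pair p q"
proof -
  have cF: "convex F" and sF: "F \<subseteq> sphere 0 1" using F unfolding ball_face_def by auto
  have "(1/2) *\<^sub>R p + (1/2) *\<^sub>R q \<in> F" using convexD[OF cF p q, of "1/2" "1/2"] by simp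
  then have "norm ((1/2) *\<^sub>R p + (1/2) *\<^sub>R q) = 1" using sF by auto
  moreover have "(1/2) *\<^sub>R p + (1/2) *\<^sub>R q = (1/2) *\<^sub>R (p + q)" by (simp add: algebra_simps)
  ultimately have "norm (p + q) = 2" by simp
  moreover have "norm p = 1" "norm q = 1" using sF p q by auto
  ultimately show ?thesis unfolding tea_pair_def by simp
qed

lemma exposed_ball_face:
  fixes g :: "'a::real_normed_vector \<Rightarrow> real"
  assumes lg: "linear g" and bd: "\<And>x. g x \<le> norm x" and x0: "norm x0 = 1" "g x0 = 1"
  shows "ball_face {z \<in> sphere 0 1. g z = 1}"
  unfolding ball_face_def
proof (intro conjI ballI allI impI)
  show "{z \<in> sphere 0 1. g z = 1} \<noteq> {}" using x0 by auto
  show "{z \<in> sphere 0 1. g z = 1} \<subseteq> sphere 0 1" by auto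
  show "convex {z \<in> sphere 0 1. g z = 1}"
    unfolding convex_def
  proof (intro ballI allI impI)
    fix x y :: 'a and u v :: real
    assume x: "x \<in> {z \<in> sphere 0 1. g z = 1}" and y: "y \<in> {z \<in> sphere 0 1. g z = 1}"
      and uv: "0 \<le> u" "0 \<le> v" "u + v = 1"
    have gc: "g (u *\<^sub>R x + v *\<^sub>R y) = 1"
      using x y uv by (simp add: linear_add[OF lg] linear_scale[OF lg])
    have "norm (u *\<^sub>R x + v *\<^sub>R y) \<le> norm (u *\<^sub>R x) + norm (v *\<^sub>R y)" by (rule norm_triangle_ineq)
    also have "\<dots> = 1" using x y uv by simp
    finally have "norm (u *\<^sub>R x + v *\<^sub>R y) = 1" using bd[of "u *\<^sub>R x + v *\<^sub>R y"] gc by linarith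
    then show "u *\<^sub>R x + v *\<^sub>R y \<in> {z \<in> sphere 0 1. g z = 1}" using gc by simp
  qed
  fix x1 x2 :: 'a and t :: real
  assume x1: "x1 \<in> sphere 0 1" and x2: "x2 \<in> sphere 0 1"
    and h: "0 < t \<and> t < 1 \<and> (1 - t) *\<^sub>R x1 + t *\<^sub>R x2 \<in> {z \<in> sphere 0 1. g z = 1}"
  have "(1 - t) * g x1 + t * g x2 = 1" using h by (simp add: linear_add[OF lg] linear_scale[OF lg])
  moreover have "g x1 \<le> 1" "g x2 \<le> 1" using bd[of x1] bd[of x2] x1 x2 by auto
  ultimately have "g x1 = 1 \<and> g x2 = 1" using comb_eq_max[of t "g x1" 1 "g x2"] h by auto
  then show "x1 \<in> {z \<in> sphere 0 1. g z = 1}" "x2 \<in> {z \<in> sphere 0 1. g z = 1}" using x1 x2 by auto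
qed

lemma facet_exists:
  assumes G: "ball_face (G :: 'a::real_normed_vector set)"
  shows "\<exists>F. ball_facet F \<and> G \<subseteq> F"
proof -
  define A where "A = {F :: 'a set. ball_face F \<and> G \<subseteq> F}"
  have "\<exists>M\<in>A. \<forall>X\<in>A. M \<subseteq> X \<longrightarrow> X = M"
  proof (rule Zorn_Lemma2, intro ballI)
    fix C assume C: "C \<in> chains A"
    have CA: "C \<subseteq> A" and ch: "\<forall>X\<in>C. \<forall>Y\<in>C. X \<subseteq> Y \<or> Y \<subseteq> X"
      using C unfolding chains_def chain_subset_def by auto
    show "\<exists>U\<in>A. \<forall>X\<in>C. X \<subseteq> U"
    proof (cases "C = {}")
      case True then show ?thesis using G A_def by auto
    next
      case False
      define U where "U = \<Union>C"
      have faces: "\<And>X. X \<in> C \<Longrightarrow> ball_face X" using CA A_def by auto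
      have "ball_face U"
        unfolding ball_face_def
      proof (intro conjI ballI allI impI)
        obtain X where X: "X \<in> C" using False by blast
        then have "X \<noteq> {}" using faces unfolding ball_face_def by blast
        then show "U \<noteq> {}" using X U_def by blast
        show "U \<subseteq> sphere 0 1" using faces unfolding U_def ball_face_def by blast
        show "convex U"
          unfolding convex_def
        proof (intro ballI allI impI)
          fix x y :: 'a and u v :: real
          assume x: "x \<in> U" and y: "y \<in> U" and uv: "0 \<le> u" "0 \<le> v" "u + v = 1"
          obtain X Y where XY: "X \<in> C" "Y \<in> C" "x \<in> X" "y \<in> Y" using x y U_def by blast
          then obtain Z where Z: "Z \<in> C" "x \<in> Z" "y \<in> Z" using ch by blast
          then have "convex Z" using faces unfolding ball_face_def by blast
          then have "u *\<^sub>R x + v *\<^sub>R y \<in> Z" using Z uv convexD by blast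
          then show "u *\<^sub>R x + v *\<^sub>R y \<in> U" using Z U_def by blast
        qed
        fix x1 x2 :: 'a and t :: real
        assume x1: "x1 \<in> sphere 0 1" and x2: "x2 \<in> sphere 0 1"
          and h: "0 < t \<and> t < 1 \<and> (1 - t) *\<^sub>R x1 + t *\<^sub>R x2 \<in> U"
        then obtain X where X: "X \<in> C" "(1 - t) *\<^sub>R x1 + t *\<^sub>R x2 \<in> X" using U_def by blast
        then have "x1 \<in> X \<and> x2 \<in> X" using faces[OF X(1)] x1 x2 h unfolding ball_face_def by blast
        then show "x1 \<in> U" "x2 \<in> U" using X U_def by blast+
      qed
      moreover have "G \<subseteq> U" using False CA A_def U_def by blast
      ultimately show ?thesis using A_def U_def by blast
    qed
  qed
  then obtain M where M: "M \<in> A" "\<forall>X\<in>A. M \<subseteq> X \<longrightarrow> X = M" by blast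
  have "ball_facet M"
    unfolding ball_facet_def
  proof (intro conjI allI impI)
    show "ball_face M" using M A_def by blast
    fix G' assume "ball_face G' \<and> M \<subseteq> G'"
    then show "G' = M" using M A_def by blast
  qed
  then show ?thesis using M A_def by blast
qed

lemma tea_in_facet:
  fixes x y :: "'a::real_normed_vector"
  assumes fd: "fin_dim_space TYPE('a)" and t: "tea_pair x y" and x: "x \<noteq> 0" and y: "y \<noteq> 0"
  shows "\<exists>F. ball_facet F \<and> (1/norm x) *\<^sub>R x \<in> F \<and> (1/norm y) *\<^sub>R y \<in> F"
proof -
  define x' where "x' = (1/norm x) *\<^sub>R x"
  define y' where "y' = (1/norm y) *\<^sub>R y"
  have t': "tea_pair x' y'" unfolding x'_def y'_def by (rule tea_scale[OF t]) auto
  have nx: "norm x' = 1" "norm y' = 1" using x y by (auto simp: x'_def y'_def)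
  obtain g where g: "linear g" "\<forall>z. \<bar>g z\<bar> \<le> norm z" "g x' = norm x'" "g y' = norm y'"
    using tea_norming[OF fd t'] by blast
  have "ball_face {z \<in> sphere 0 1. g z = 1}"
    by (rule exposed_ball_face[OF g(1) _ nx(1)]) (use g nx abs_le_D1 in auto)
  then obtain F where "ball_facet F" "{z \<in> sphere 0 1. g z = 1} \<subseteq> F" using facet_exists by blast
  then show ?thesis using g nx by (auto simp: x'_def[symmetric] y'_def[symmetric])
qed

lemma comb_in_F:
  fixes F :: "'a::real_normed_vector set"
  assumes cF: "convex F" and p0: "p0 \<in> F" and Q: "finite Q" "0 \<notin> Q" and QF: "\<And>q. q \<in> Q \<Longrightarrow> p0 + q \<in> F"
    and b0: "\<And>q. q \<in> Q \<Longrightarrow> 0 \<le> \<beta> q" and b1: "sum \<beta> Q \<le> 1"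
  shows "p0 + (\<Sum>q\<in>Q. \<beta> q *\<^sub>R q) \<in> F"
proof -
  define a where "a = (\<lambda>j. if j = 0 then 1 - sum \<beta> Q else \<beta> j)"
  have aQ: "sum a Q = sum \<beta> Q" using Q(2) by (intro sum.cong) (auto simp: a_def)
  have sa: "sum a (insert 0 Q) = 1" using Q aQ by (simp add: a_def)
  have "(\<Sum>j\<in>insert 0 Q. a j *\<^sub>R (p0 + j)) \<in> F"
  proof (rule convex_sum[OF _ cF sa])
    show "finite (insert 0 Q)" using Q by simp
    show "0 \<le> a i" if "i \<in> insert 0 Q" for i using that b0 b1 by (auto simp: a_def)
    show "p0 + i \<in> F" if "i \<in> insert 0 Q" for i using that p0 QF by auto
  qed
  also have "(\<Sum>j\<in>insert 0 Q. a j *\<^sub>R (p0 + j)) = a 0 *\<^sub>R p0 + (\<Sum>j\<in>Q. a j *\<^sub>R (p0 + j))"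
    using Q by (simp add: sum.insert)
  also have "(\<Sum>j\<in>Q. a j *\<^sub>R (p0 + j)) = (\<Sum>j\<in>Q. \<beta> j *\<^sub>R p0 + \<beta> j *\<^sub>R j)"
    using Q(2) by (intro sum.cong) (auto simp: a_def scaleR_right_distrib)
  also have "\<dots> = sum \<beta> Q *\<^sub>R p0 + (\<Sum>j\<in>Q. \<beta> j *\<^sub>R j)"
    by (simp add: sum.distrib scaleR_sum_left)
  also have "a 0 *\<^sub>R p0 + (sum \<beta> Q *\<^sub>R p0 + (\<Sum>j\<in>Q. \<beta> j *\<^sub>R j)) = p0 + (\<Sum>q\<in>Q. \<beta> q *\<^sub>R q)"
    by (simp add: a_def algebra_simps)
  finally show ?thesis .
qed

lemma relint_point:
  fixes F :: "'a::real_normed_vector set"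
  assumes fd: "fin_dim_space TYPE('a)" and cF: "convex F" and ne: "F \<noteq> {}"
  shows "\<exists>c\<in>F. \<forall>v\<in>F. \<exists>w\<in>F. \<exists>e>0. (1 + e) *\<^sub>R c = w + e *\<^sub>R v"
proof -
  obtain p0 where p0: "p0 \<in> F" using ne by blast
  define D where "D = (\<lambda>v. v - p0) ` F"
  obtain Q where Q: "finite Q" "independent Q" "Q \<subseteq> D" "D \<subseteq> span Q"
    using fin_dim_finite_span[OF fd] by blast
  have Q0: "0 \<notin> Q" using Q(2) dependent_zero by blast
  have QF: "\<And>q. q \<in> Q \<Longrightarrow> p0 + q \<in> F" using Q(3) D_def by auto
  define K where "K = real (card Q) + 1"
  have K: "K \<ge> 1" by (simp add: K_def)
  define c where "c = p0 + (\<Sum>q\<in>Q. (1/K) *\<^sub>R q)"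
  have cF': "c \<in> F" unfolding c_def
  proof (rule comb_in_F[OF cF p0 Q(1) Q0 QF])
    show "0 \<le> 1/K" for q using K by simp
    show "(\<Sum>q\<in>Q. 1/K) \<le> 1" using K by (simp add: K_def field_simps)
  qed
  show ?thesis
  proof (rule bexI[OF _ cF'], intro ballI)
    fix v assume v: "v \<in> F"
    have "v - p0 \<in> span Q" using Q(4) v D_def by auto
    then obtain u where u: "v - p0 = (\<Sum>q\<in>Q. u q *\<^sub>R q)" using span_finite[OF Q(1)] by auto
    define A where "A = (\<Sum>q\<in>Q. \<bar>u q\<bar>) + 1"
    have A1: "A \<ge> 1" by (simp add: A_def sum_nonneg)
    define e where "e = 1 / (K * A)"
    have e: "e > 0" using K A1 by (simp add: e_def)
    have eKA: "e * A = 1 / K" using K A1 by (simp add: e_def)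
    define \<beta> where "\<beta> = (\<lambda>q. (1 + e) / K - e * u q)"
    have w: "(1 + e) *\<^sub>R c - e *\<^sub>R v = p0 + (\<Sum>q\<in>Q. \<beta> q *\<^sub>R q)"
    proof -
      have v': "v = p0 + (\<Sum>q\<in>Q. u q *\<^sub>R q)" using u by (simp add: algebra_simps)
      have "(1 + e) *\<^sub>R c - e *\<^sub>R v
            = p0 + ((\<Sum>q\<in>Q. ((1 + e) / K) *\<^sub>R q) - (\<Sum>q\<in>Q. (e * u q) *\<^sub>R q))"
        by (simp add: c_def v' algebra_simps scaleR_sum_right)
      also have "(\<Sum>q\<in>Q. ((1 + e) / K) *\<^sub>R q) - (\<Sum>q\<in>Q. (e * u q) *\<^sub>R q) = (\<Sum>q\<in>Q. \<beta> q *\<^sub>R q)"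
        by (simp add: \<beta>_def sum_subtractf[symmetric] scaleR_diff_left)
      finally show ?thesis .
    qed
    have uA: "\<bar>u q\<bar> \<le> A" if "q \<in> Q" for q
    proof -
      have "\<bar>u q\<bar> \<le> (\<Sum>q\<in>Q. \<bar>u q\<bar>)" using Q(1) that by (intro member_le_sum) auto
      then show ?thesis by (simp add: A_def)
    qed
    have b0: "0 \<le> \<beta> q" if "q \<in> Q" for q
    proof -
      have "e * u q \<le> e * \<bar>u q\<bar>" using e by (simp add: mult_left_mono)
      also have "\<dots> \<le> e * A" using e uA[OF that] by (simp add: mult_left_mono)
      also have "\<dots> = 1 / K" by (rule eKA)
      also have "\<dots> \<le> (1 + e) / K" using K e by (simp add: divide_right_mono)
      finally show ?thesis by (simp add: \<beta>_def)
    qed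
    have b1: "sum \<beta> Q \<le> 1"
    proof -
      have "sum \<beta> Q = (\<Sum>q\<in>Q. (1 + e) / K) - (\<Sum>q\<in>Q. e * u q)"
        unfolding \<beta>_def by (rule sum_subtractf)
      also have "\<dots> = real (card Q) * ((1 + e) / K) - e * (\<Sum>q\<in>Q. u q)"
        by (simp only: sum_constant sum_distrib_left[symmetric])
      also have "- (e * (\<Sum>q\<in>Q. u q)) \<le> e * (A - 1)"
      proof -
        have "- (\<Sum>q\<in>Q. u q) \<le> (\<Sum>q\<in>Q. \<bar>u q\<bar>)"
          using sum_abs[of u Q] abs_le_D2[of "sum u Q"] by linarith
        then have "- (\<Sum>q\<in>Q. u q) \<le> A - 1" by (simp add: A_def)
        then show ?thesis using e by (metis minus_mult_right mult_left_mono less_imp_le)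
      qed
      then have "real (card Q) * ((1 + e) / K) - e * (\<Sum>q\<in>Q. u q) \<le> real (card Q) * ((1 + e) / K) + e * (A - 1)"
        by linarith
      also have "\<dots> = (K - 1) / K + e * ((K - 1) / K) + e * A - e"
      proof -
        have kq: "real (card Q) = K - 1" by (simp add: K_def)
        have K0: "K \<noteq> 0" using K by simp
        show ?thesis unfolding kq using K0 by (simp add: field_simps)
      qed
      also have "\<dots> \<le> (K - 1) / K + e + e * A - e"
      proof -
        have "(K - 1) / K \<le> 1" using K by simp
        then have "e * ((K - 1) / K) \<le> e * 1" using e by (intro mult_left_mono) auto
        then have "e * ((K - 1) / K) \<le> e" by simp
        then show ?thesis by linarith
      qed
      also have "\<dots> = 1" using eKA K by (simp add: field_simps)
      finally show ?thesis .
    qed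
    have wF: "(1 + e) *\<^sub>R c - e *\<^sub>R v \<in> F"
      unfolding w by (rule comb_in_F[OF cF p0 Q(1) Q0 QF b0 b1])
    have "(1 + e) *\<^sub>R c = ((1 + e) *\<^sub>R c - e *\<^sub>R v) + e *\<^sub>R v" by simp
    then show "\<exists>w\<in>F. \<exists>e>0. (1 + e) *\<^sub>R c = w + e *\<^sub>R v" using e wF by blast
  qed
qed

lemma fd_continuous:
  fixes f :: "'a::real_normed_vector \<Rightarrow> real"
  assumes fd: "fin_dim_space TYPE('a)" and lf: "linear f"
  shows "continuous_on S f"
  using fin_dim_linear_bounded[OF fd lf] linear_continuous_on by blast

lemma extreme_point_exists:
  fixes K :: "'a::real_normed_vector set"
  assumes fd: "fin_dim_space TYPE('a)" and K: "compact K" "K \<noteq> {}"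
  shows "\<exists>e. e extreme_point_of K"
proof -
  obtain B :: "'a set" where B: "finite B" "independent B" "span B = UNIV" using fin_dim_basis[OF fd] by blast
  define \<phi> where "\<phi> = (\<lambda>b x. representation B x b)"
  have lin: "linear (\<phi> b)" for b
    unfolding \<phi>_def
    by (intro linearI) (simp_all add: representation_add[OF B(2)] representation_scale[OF B(2)] B(3))
  have rep: "x = (\<Sum>b\<in>B. \<phi> b x *\<^sub>R b)" for x
    unfolding \<phi>_def using sum_representation_eq[OF B(2) _ B(1) order.refl, of x] B(3) by simp
  define f where "f = (\<lambda>x. \<Sum>b\<in>B. (\<phi> b x)^2)"
  have cf: "continuous_on K f"
    unfolding f_def by (intro continuous_intros fd_continuous[OF fd lin])
  obtain e where e: "e \<in> K" "\<forall>x\<in>K. f x \<le> f e" using continuous_attains_sup[OF K(1) K(2) cf] by blast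
  have "e extreme_point_of K"
    unfolding extreme_point_of_def
  proof (intro conjI ballI)
    show "e \<in> K" by (rule e(1))
    fix a b assume a: "a \<in> K" and b: "b \<in> K"
    show "e \<notin> open_segment a b"
    proof
      assume "e \<in> open_segment a b"
      then obtain u where ab: "a \<noteq> b" and u: "0 < u" "u < 1" and eu: "e = (1 - u) *\<^sub>R a + u *\<^sub>R b"
        unfolding in_segment by blast
      have pe: "\<phi> c e = (1 - u) * \<phi> c a + u * \<phi> c b" for c
        using eu by (simp add: linear_add[OF lin] linear_scale[OF lin])
      have trm: "(\<phi> c e)^2 = (1 - u) * (\<phi> c a)^2 + u * (\<phi> c b)^2 - u * (1 - u) * (\<phi> c a - \<phi> c b)^2" for c
        unfolding pe by (simp add: power2_eq_square algebra_simps)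
      have fe: "f e = (1 - u) * f a + u * f b - u * (1 - u) * (\<Sum>c\<in>B. (\<phi> c a - \<phi> c b)^2)"
        unfolding f_def trm by (simp add: sum.distrib sum_subtractf sum_distrib_left)
      obtain c where c: "c \<in> B" "\<phi> c a \<noteq> \<phi> c b"
      proof (rule ccontr)
        assume "\<not> thesis"
        then have "\<forall>c\<in>B. \<phi> c a = \<phi> c b" using that by blast
        then have "(\<Sum>c\<in>B. \<phi> c a *\<^sub>R c) = (\<Sum>c\<in>B. \<phi> c b *\<^sub>R c)" by simp
        then show False using rep[of a] rep[of b] ab by simp
      qed
      have "0 < (\<phi> c a - \<phi> c b)^2" using c by simp
      also have "\<dots> \<le> (\<Sum>c\<in>B. (\<phi> c a - \<phi> c b)^2)"
        using B(1) c(1) by (intro member_le_sum) auto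
      finally have S: "0 < (\<Sum>c\<in>B. (\<phi> c a - \<phi> c b)^2)" .
      have "0 < u * (1 - u)" using u by simp
      then have "0 < u * (1 - u) * (\<Sum>c\<in>B. (\<phi> c a - \<phi> c b)^2)" using S by simp
      moreover have "(1 - u) * f a + u * f b \<le> (1 - u) * f e + u * f e"
        using e(2) a b u by (intro add_mono mult_left_mono) auto
      ultimately show False using fe by (simp add: algebra_simps)
    qed
  qed
  then show ?thesis by blast
qed

lemma bauer:
  fixes \<psi> :: "'a::real_normed_vector \<Rightarrow> real"
  assumes fd: "fin_dim_space TYPE('a)" and l: "linear \<psi>"
  shows "\<exists>e. e extreme_point_of cball 0 1 \<and> (\<forall>x\<in>cball 0 1. \<psi> x \<le> \<psi> e)"
proof -
  have cB: "compact (cball (0::'a) 1)" by (rule fin_dim_compact_cball[OF fd])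
  have ne: "cball (0::'a) 1 \<noteq> {}" by auto
  obtain x0 where x0: "x0 \<in> cball 0 1" "\<forall>x\<in>cball 0 1. \<psi> x \<le> \<psi> x0"
    using continuous_attains_sup[OF cB ne fd_continuous[OF fd l]] by blast
  define M where "M = cball 0 1 \<inter> {x. \<psi> x = \<psi> x0}"
  have clM: "closed {x. \<psi> x = \<psi> x0}"
    by (rule closed_Collect_eq) (auto intro: fd_continuous[OF fd l] continuous_intros)
  have cM: "compact M" unfolding M_def using cB clM by (rule compact_Int_closed)
  have neM: "M \<noteq> {}" using x0 M_def by auto
  obtain e where e: "e extreme_point_of M" using extreme_point_exists[OF fd cM neM] by blast
  have eM: "e \<in> M" using e unfolding extreme_point_of_def by blast
  have "e extreme_point_of cball 0 1"
    unfolding extreme_point_of_def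
  proof (intro conjI ballI)
    show "e \<in> cball 0 1" using eM M_def by auto
    fix a b assume a: "a \<in> cball (0::'a) 1" and b: "b \<in> cball (0::'a) 1"
    show "e \<notin> open_segment a b"
    proof
      assume es: "e \<in> open_segment a b"
      then obtain u where u: "0 < u" "u < 1" and eu: "e = (1 - u) *\<^sub>R a + u *\<^sub>R b"
        unfolding in_segment by blast
      have "(1 - u) * \<psi> a + u * \<psi> b = \<psi> x0"
        using eu eM M_def by (simp add: linear_add[OF l] linear_scale[OF l])
      then have "\<psi> a = \<psi> x0 \<and> \<psi> b = \<psi> x0"
        using comb_eq_max[OF u] x0(2) a b by blast
      then have "a \<in> M" "b \<in> M" using a b M_def by auto
      then show False using e es unfolding extreme_point_of_def by blast
    qed
  qed
  moreover have "\<forall>x\<in>cball 0 1. \<psi> x \<le> \<psi> e" using x0 eM M_def by auto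
  ultimately show ?thesis by blast
qed

theorem facet_span:
  fixes F :: "'a::real_normed_vector set"
  assumes fd: "fin_dim_space TYPE('a)" and poly: "polyhedral_space TYPE('a)" and F: "ball_facet F"
  shows "span F = UNIV"
proof (rule ccontr)
  assume nsp: "span F \<noteq> UNIV"
  have bf: "ball_face F" using F unfolding ball_facet_def by blast
  have cF: "convex F" and neF: "F \<noteq> {}" and sF: "F \<subseteq> sphere 0 1"
    using bf unfolding ball_face_def by auto
  obtain c where c: "c \<in> F" "\<forall>v\<in>F. \<exists>w\<in>F. \<exists>e>0. (1 + e) *\<^sub>R c = w + e *\<^sub>R v"
    using relint_point[OF fd cF neF] by blast
  obtain g where g: "linear g" "g c = norm c" "\<forall>x. \<bar>g x\<bar> \<le> norm x"
    using hahn_banach_fd[OF fd] by blast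
  have gle: "g x \<le> norm x" for x using g(3) abs_le_D1 by blast
  have nc: "norm c = 1" using c sF by auto
  have gF: "g v = 1" if v: "v \<in> F" for v
  proof -
    obtain w e where w: "w \<in> F" "e > 0" "(1 + e) *\<^sub>R c = w + e *\<^sub>R v" using c(2) v by blast
    have "(1 + e) * g c = g w + e * g v"
      using arg_cong[OF w(3), of g] by (simp add: linear_add[OF g(1)] linear_scale[OF g(1)])
    moreover have "g w \<le> 1" "g v \<le> 1" using gle[of w] gle[of v] w v sF by auto
    ultimately have "e * g v \<ge> e" using g(2) nc by (simp add: algebra_simps)
    then have "g v \<ge> 1" using w(2) by simp
    then show ?thesis using \<open>g v \<le> 1\<close> by simp
  qed
  obtain x0 where x0: "x0 \<notin> span F" using nsp by blast
  obtain h :: "'a \<Rightarrow> real" where h: "linear h" "\<forall>v\<in>span F. h v = 0" "h x0 = 1"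
    using ext_functional[OF x0] by blast
  have x00: "x0 \<noteq> 0" using x0 span_zero by blast
  obtain e1 where e1: "e1 extreme_point_of cball 0 1" "\<forall>x\<in>cball 0 1. h x \<le> h e1"
    using bauer[OF fd h(1)] by blast
  have "h ((1 / norm x0) *\<^sub>R x0) \<le> h e1" using e1(2) x00 by simp
  then have "1 / norm x0 \<le> h e1" using h(3) x00 by (simp add: linear_scale[OF h(1)])
  moreover have "0 < 1 / norm x0" using x00 by simp
  ultimately have he1: "h e1 > 0" by linarith
  define E where "E = {x. x extreme_point_of cball (0::'a) 1}"
  have finE: "finite E" using poly unfolding polyhedral_space_def E_def .
  have EB: "x \<in> cball 0 1" if "x \<in> E" for x using that unfolding E_def extreme_point_of_def by blast
  define Ep where "Ep = {e \<in> E. h e > 0}"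
  have finEp: "finite Ep" using finE Ep_def by simp
  have neEp: "Ep \<noteq> {}" using e1 he1 E_def Ep_def by blast
  define \<epsilon> where "\<epsilon> = Min ((\<lambda>e. (1 - g e) / h e) ` Ep)"
  have eps0: "0 \<le> \<epsilon>"
    unfolding \<epsilon>_def
  proof (subst Min_ge_iff)
    show "finite ((\<lambda>e. (1 - g e) / h e) ` Ep)" using finEp by simp
    show "(\<lambda>e. (1 - g e) / h e) ` Ep \<noteq> {}" using neEp by simp
    show "\<forall>a\<in>(\<lambda>e. (1 - g e) / h e) ` Ep. 0 \<le> a"
    proof
      fix a assume "a \<in> (\<lambda>e. (1 - g e) / h e) ` Ep"
      then obtain e where e: "e \<in> Ep" "a = (1 - g e) / h e" by blast
      have "g e \<le> 1" using gle[of e] EB[of e] e Ep_def by auto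
      then show "0 \<le> a" using e Ep_def by simp
    qed
  qed
  have "\<epsilon> \<in> (\<lambda>e. (1 - g e) / h e) ` Ep"
    unfolding \<epsilon>_def by (rule Min_in) (use finEp neEp in auto)
  then obtain es where es: "es \<in> Ep" "(1 - g es) / h es = \<epsilon>" by auto
  have epsle: "\<epsilon> \<le> (1 - g e) / h e" if "e \<in> Ep" for e
    unfolding \<epsilon>_def using finEp that by (intro Min_le) auto
  define g' where "g' = (\<lambda>x. g x + \<epsilon> * h x)"
  have lg': "linear g'" unfolding g'_def
    by (intro linearI) (simp_all add: linear_add[OF g(1)] linear_add[OF h(1)] linear_scale[OF g(1)] linear_scale[OF h(1)] algebra_simps)
  obtain e2 where e2: "e2 extreme_point_of cball 0 1" "\<forall>x\<in>cball 0 1. g' x \<le> g' e2"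
    using bauer[OF fd lg'] by blast
  have e2E: "e2 \<in> E" using e2 E_def by blast
  have "g' e2 \<le> 1"
  proof (cases "h e2 > 0")
    case True
    then have "e2 \<in> Ep" using e2E Ep_def by blast
    then have "\<epsilon> \<le> (1 - g e2) / h e2" by (rule epsle)
    then have "\<epsilon> * h e2 \<le> 1 - g e2" using True by (simp add: pos_le_divide_eq)
    then show ?thesis by (simp add: g'_def)
  next
    case False
    then have "\<epsilon> * h e2 \<le> 0" using eps0 by (simp add: mult_nonneg_nonpos)
    moreover have "g e2 \<le> 1" using gle[of e2] EB[OF e2E] by auto
    ultimately show ?thesis by (simp add: g'_def)
  qed
  then have g'B: "\<forall>x\<in>cball 0 1. g' x \<le> 1" using e2 by fastforce
  have g'le: "g' x \<le> norm x" for x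
  proof (cases "x = 0")
    case True then show ?thesis using linear_0[OF lg'] by simp
  next
    case False
    have "g' ((1 / norm x) *\<^sub>R x) \<le> 1" using g'B False by simp
    then show ?thesis using False by (simp add: linear_scale[OF lg'] field_simps)
  qed
  have hes: "h es > 0" using es Ep_def by blast
  have g'es: "g' es = 1" using es(2) hes by (simp add: g'_def field_simps)
  have nes: "norm es = 1"
    using EB[of es] es(1) Ep_def g'le[of es] g'es by auto
  have face: "ball_face {z \<in> sphere 0 1. g' z = 1}"
    by (rule exposed_ball_face[OF lg' g'le nes g'es])
  have sub: "F \<subseteq> {z \<in> sphere 0 1. g' z = 1}"
  proof
    fix v assume v: "v \<in> F"
    have "h v = 0" using h(2) span_base[OF v] by blast
    then show "v \<in> {z \<in> sphere 0 1. g' z = 1}" using gF[OF v] sF v by (auto simp: g'_def)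
  qed
  have "{z \<in> sphere 0 1. g' z = 1} = F" using F face sub unfolding ball_facet_def by blast
  moreover have "es \<in> {z \<in> sphere 0 1. g' z = 1}" using nes g'es by simp
  ultimately have "es \<in> F" by simp
  then have "h es = 0" using h(2) span_base by blast
  then show False using hes by simp
qed

lemma tea_imp_par:
  fixes T :: "'a::real_normed_vector \<Rightarrow> 'b::real_normed_vector"
  assumes lT: "linear T" and TT: "\<forall>x y. tea_pair x y \<longrightarrow> tea_pair (T x) (T y)"
  shows "\<forall>x y. parallel_pair x y \<longrightarrow> parallel_pair (T x) (T y)"
proof (intro allI impI)
  fix x y :: 'a assume "parallel_pair x y"
  then obtain c :: real where c: "\<bar>c\<bar> = 1" "norm (x + c *\<^sub>R y) = norm x + norm y"
    unfolding parallel_pair_def by blast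
  have "tea_pair x (c *\<^sub>R y)" using c unfolding tea_pair_def by simp
  then have "tea_pair (T x) (T (c *\<^sub>R y))" using TT by blast
  then have "norm (T x + c *\<^sub>R T y) = norm (T x) + norm (T y)"
    using c(1) unfolding tea_pair_def by (simp add: linear_scale[OF lT])
  then show "parallel_pair (T x) (T y)" using c(1) unfolding parallel_pair_def by blast
qed

lemma tea_normalize:
  fixes T :: "'a::real_normed_vector \<Rightarrow> 'b::real_normed_vector"
  assumes lT: "linear T" and x: "x \<noteq> 0" and y: "y \<noteq> 0"
    and t: "tea_pair (T ((1/norm x) *\<^sub>R x)) (T ((1/norm y) *\<^sub>R y))"
  shows "tea_pair (T x) (T y)"
proof -
  have "tea_pair (norm x *\<^sub>R T ((1/norm x) *\<^sub>R x)) (norm y *\<^sub>R T ((1/norm y) *\<^sub>R y))"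
    by (rule tea_scale[OF t]) auto
  then show ?thesis using x y by (simp add: linear_scale[OF lT])
qed

lemma J_imp_tea:
  fixes T :: "'a::real_normed_vector \<Rightarrow> 'b::real_normed_vector"
  assumes fa: "fin_dim_space TYPE('a)" and fb: "fin_dim_space TYPE('b)" and lT: "linear T"
    and JJ: "\<forall>F. ball_facet F \<longrightarrow> (\<exists>u\<in>F. \<forall>v\<in>F - {v. T v = 0}. supp_J (T u) \<subseteq> supp_J (T v))"
  shows "\<forall>x y. tea_pair x y \<longrightarrow> tea_pair (T x) (T y)"
proof (intro allI impI)
  fix x y :: 'a assume t: "tea_pair x y"
  show "tea_pair (T x) (T y)"
  proof (cases "T x = 0 \<or> T y = 0")
    case True then show ?thesis unfolding tea_pair_def by auto
  next
    case False
    then have x: "x \<noteq> 0" and y: "y \<noteq> 0" using linear_0[OF lT] by auto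
    define x' where "x' = (1/norm x) *\<^sub>R x"
    define y' where "y' = (1/norm y) *\<^sub>R y"
    obtain F where F: "ball_facet F" "x' \<in> F" "y' \<in> F"
      using tea_in_facet[OF fa t x y] unfolding x'_def y'_def by blast
    have Tx0: "T x' \<noteq> 0" "T y' \<noteq> 0" using False x y by (simp_all add: x'_def y'_def linear_scale[OF lT])
    obtain u where u: "u \<in> F" "\<forall>v\<in>F - {v. T v = 0}. supp_J (T u) \<subseteq> supp_J (T v)"
      using JJ F(1) by blast
    have Jx: "supp_J (T u) \<subseteq> supp_J (T x')" and Jy: "supp_J (T u) \<subseteq> supp_J (T y')"
      using u F Tx0 by auto
    obtain g0 where g0: "g0 \<in> supp_J (T x')" using hb_J[OF fb Tx0(1)] by blast
    have Tu: "T u \<noteq> 0"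
    proof
      assume Tu: "T u = 0"
      have bl: "bounded_linear g0" and o: "onorm g0 = 1" using g0 unfolding supp_J_def by auto
      have g00: "g0 0 = 0" using bl by (simp add: linear_simps)
      have "g0 \<in> supp_J (T u)" using Tu bl o g00 unfolding supp_J_def by auto
      moreover have "(\<lambda>z. - g0 z) \<in> supp_J (T u)"
        using Tu bl o g00 unfolding supp_J_def by (auto simp: onorm_neg bounded_linear_minus)
      ultimately have "g0 (T x') = norm (T x')" "- g0 (T x') = norm (T x')"
        using Jx unfolding supp_J_def by auto
      then have "norm (T x') = 0" by simp
      then show False using Tx0 by simp
    qed
    obtain g where g: "g \<in> supp_J (T u)" using hb_J[OF fb Tu] by blast
    then have gx: "g \<in> supp_J (T x')" and gy: "g \<in> supp_J (T y')" using Jx Jy by auto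
    have lg: "linear g" and gb: "\<And>z. \<bar>g z\<bar> \<le> norm z" using J_props[OF g] by auto
    have "g (T x' + T y') = norm (T x') + norm (T y')"
      using J_props(3)[OF gx] J_props(3)[OF gy] by (simp add: linear_add[OF lg])
    moreover have "g (T x' + T y') \<le> norm (T x' + T y')" using gb abs_le_D1 by blast
    ultimately have "tea_pair (T x') (T y')"
      unfolding tea_pair_def using norm_triangle_ineq[of "T x'" "T y'"] by linarith
    then show ?thesis using tea_normalize[OF lT x y] unfolding x'_def y'_def by blast
  qed
qed

lemma tea_imp_J:
  fixes T :: "'a::real_normed_vector \<Rightarrow> 'b::real_normed_vector"
  assumes fa: "fin_dim_space TYPE('a)" and lT: "linear T"
    and TT: "\<forall>x y. tea_pair x y \<longrightarrow> tea_pair (T x) (T y)"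
  shows "\<forall>F. ball_facet F \<longrightarrow> (\<exists>u\<in>F. \<forall>v\<in>F - {v. T v = 0}. supp_J (T u) \<subseteq> supp_J (T v))"
proof (intro allI impI)
  fix F :: "'a set" assume F: "ball_facet F"
  have bf: "ball_face F" using F unfolding ball_facet_def by blast
  have cF: "convex F" and neF: "F \<noteq> {}" using bf unfolding ball_face_def by auto
  obtain c where c: "c \<in> F" "\<forall>v\<in>F. \<exists>w\<in>F. \<exists>e>0. (1 + e) *\<^sub>R c = w + e *\<^sub>R v"
    using relint_point[OF fa cF neF] by blast
  show "\<exists>u\<in>F. \<forall>v\<in>F - {v. T v = 0}. supp_J (T u) \<subseteq> supp_J (T v)"
  proof (rule bexI[OF _ c(1)], intro ballI subsetI)
    fix v g assume v: "v \<in> F - {v. T v = 0}" and g: "g \<in> supp_J (T c)"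
    obtain w e where w: "w \<in> F" "e > 0" "(1 + e) *\<^sub>R c = w + e *\<^sub>R v" using c(2) v by blast
    have lg: "linear g" and gb: "\<And>z. \<bar>g z\<bar> \<le> norm z" and gc: "g (T c) = norm (T c)"
      using J_props[OF g] by auto
    have "tea_pair w v" using face_pairs_tea[OF bf w(1)] v by blast
    then have "tea_pair (T w) (T v)" using TT by blast
    then have tw: "tea_pair (1 *\<^sub>R T w) (e *\<^sub>R T v)" by (rule tea_scale) (use w in auto)
    have eqT: "(1 + e) *\<^sub>R T c = T w + e *\<^sub>R T v"
      using arg_cong[OF w(3), of T] by (simp add: linear_add[OF lT] linear_scale[OF lT])
    have n1: "(1 + e) * norm (T c) = norm (T w) + e * norm (T v)"
    proof -
      have "norm ((1 + e) *\<^sub>R T c) = (1 + e) * norm (T c)" using w(2) by simp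
      moreover have "norm (T w + e *\<^sub>R T v) = norm (T w) + e * norm (T v)"
        using tw w(2) unfolding tea_pair_def by simp
      ultimately show ?thesis using eqT by simp
    qed
    have g1: "(1 + e) * g (T c) = g (T w) + e * g (T v)"
      using arg_cong[OF eqT, of g] by (simp add: linear_add[OF lg] linear_scale[OF lg])
    have "g (T w) \<le> norm (T w)" "g (T v) \<le> norm (T v)" using gb abs_le_D1 by blast+
    moreover have "g (T w) + e * g (T v) = norm (T w) + e * norm (T v)"
      using n1 g1 unfolding gc by linarith
    ultimately have "e * norm (T v) \<le> e * g (T v)" by linarith
    then have gv: "g (T v) = norm (T v)" using w(2) \<open>g (T v) \<le> norm (T v)\<close> by simp
    show "g \<in> supp_J (T v)" using g gv unfolding supp_J_def by simp
  qed
qed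

lemma mid_ident1:
  fixes a b c :: "'a::real_vector"
  shows "(1 - s) *\<^sub>R ((1 - 1/2) *\<^sub>R a + (1/2) *\<^sub>R c) + s *\<^sub>R ((1 - 1/2) *\<^sub>R b + (1/2) *\<^sub>R c)
         = (1/2) *\<^sub>R ((1 - s) *\<^sub>R a + s *\<^sub>R b) + (1/2) *\<^sub>R c"
proof -
  have "(1 - s) *\<^sub>R ((1 - 1/2) *\<^sub>R a + (1/2) *\<^sub>R c) + s *\<^sub>R ((1 - 1/2) *\<^sub>R b + (1/2) *\<^sub>R c)
     = ((1 - s) * (1/2)) *\<^sub>R a + (s * (1/2)) *\<^sub>R b + ((1 - s) * (1/2) + s * (1/2)) *\<^sub>R c"
    by (simp only: scaleR_add_right scaleR_scaleR scaleR_add_left) (simp add: add_ac)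
  also have "(1 - s) * (1/2) + s * (1/2) = (1/2::real)" by (simp add: field_simps)
  finally show ?thesis by (simp add: scaleR_add_right scaleR_scaleR mult.commute)
qed

lemma mid_ident2:
  fixes a b c :: "'a::real_vector"
  shows "((1 - 1/2) *\<^sub>R a + (1/2) *\<^sub>R c) + ((1 - 1/2) *\<^sub>R b + (1/2) *\<^sub>R c) = (1/2) *\<^sub>R (a + b) + c"
proof -
  have h: "(1/2::real) *\<^sub>R c + (1/2) *\<^sub>R c = c" by (simp add: scaleR_add_left[symmetric])
  have "((1 - 1/2) *\<^sub>R a + (1/2) *\<^sub>R c) + ((1 - 1/2) *\<^sub>R b + (1/2) *\<^sub>R c)
      = (1/2) *\<^sub>R (a + b) + ((1/2::real) *\<^sub>R c + (1/2) *\<^sub>R c)"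
    by (simp add: scaleR_add_right add_ac)
  then show ?thesis by (simp only: h)
qed

lemma not_zero_seg:
  fixes p q a :: "'b::real_normed_vector"
  assumes p: "p \<in> span {a}" "p \<noteq> 0" and q: "q \<notin> span {a}"
  shows "0 \<notin> closed_segment p q"
proof
  assume "0 \<in> closed_segment p q"
  then obtain s where s: "0 \<le> s" "s \<le> 1" "0 = (1 - s) *\<^sub>R p + s *\<^sub>R q" unfolding in_segment by blast
  show False
  proof (cases "s = 0")
    case True then show False using s p by simp
  next
    case False
    have "q = - (((1 - s) / s) *\<^sub>R p)"
    proof -
      have "s *\<^sub>R q = - ((1 - s) *\<^sub>R p)" using s(3) by (simp add: eq_neg_iff_add_eq_0 add.commute)
      then have "(1/s) *\<^sub>R (s *\<^sub>R q) = (1/s) *\<^sub>R (- ((1 - s) *\<^sub>R p))" by simp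
      then show ?thesis using False by (simp add: divide_simps)
    qed
    moreover have "- (((1 - s) / s) *\<^sub>R p) \<in> span {a}" using p(1) by (intro span_neg span_scale)
    ultimately show False using q by simp
  qed
qed

lemma par_imp_tea:
  fixes T :: "'a::real_normed_vector \<Rightarrow> 'b::real_normed_vector"
  assumes fa: "fin_dim_space TYPE('a)" and fb: "fin_dim_space TYPE('b)"
    and pa: "polyhedral_space TYPE('a)" and lT: "linear T" and rk: "dim (range T) \<ge> 2"
    and PP: "\<forall>x y. parallel_pair x y \<longrightarrow> parallel_pair (T x) (T y)"
  shows "\<forall>x y. tea_pair x y \<longrightarrow> tea_pair (T x) (T y)"
proof (intro allI impI)
  fix x y :: 'a assume t: "tea_pair x y"
  show "tea_pair (T x) (T y)"
  proof (cases "x = 0 \<or> y = 0")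
    case True then show ?thesis using linear_0[OF lT] unfolding tea_pair_def by auto
  next
    case False
    then have x: "x \<noteq> 0" and y: "y \<noteq> 0" by auto
    define x' where "x' = (1/norm x) *\<^sub>R x"
    define y' where "y' = (1/norm y) *\<^sub>R y"
    obtain F where F: "ball_facet F" "x' \<in> F" "y' \<in> F"
      using tea_in_facet[OF fa t x y] unfolding x'_def y'_def by blast
    have bf: "ball_face F" using F unfolding ball_facet_def by blast
    have cF: "convex F" using bf unfolding ball_face_def by auto
    have cTF: "convex (T ` F)" by (rule convex_linear_image[OF lT cF])
    have parC: "parallel_pair p q" if "p \<in> T ` F" "q \<in> T ` F" for p q
    proof -
      from that(1) obtain p' where p': "p' \<in> F" "p = T p'" by blast
      from that(2) obtain q' where q': "q' \<in> F" "q = T q'" by blast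
      have pq: "p' \<in> F" "q' \<in> F" "p = T p'" "q = T q'" using p' q' by auto
      have "tea_pair p' q'" by (rule face_pairs_tea[OF bf pq(1,2)])
      then have "parallel_pair p' q'" unfolding tea_pair_def parallel_pair_def
        by (intro exI[of _ 1]) simp
      then have "parallel_pair (T p') (T q')" using PP by blast
      then show ?thesis using pq by simp
    qed
    have KLC: "tea_pair p q" if "p \<in> T ` F" "q \<in> T ` F" "0 \<notin> closed_segment p q" for p q
    proof (rule KL[OF fb that(3)])
      have sub: "closed_segment p q \<subseteq> T ` F" by (rule closed_segment_subset[OF that(1,2) cTF])
      show "\<forall>u\<in>closed_segment p q. \<forall>v\<in>closed_segment p q. parallel_pair u v"
      proof (intro ballI)
        fix u v assume "u \<in> closed_segment p q" "v \<in> closed_segment p q"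
        then have "u \<in> T ` F" "v \<in> T ` F" using sub by auto
        then show "parallel_pair u v" by (rule parC)
      qed
    qed
    define a where "a = T x'"
    define b where "b = T y'"
    have aF: "a \<in> T ` F" and bF: "b \<in> T ` F" using F a_def b_def by auto
    have "tea_pair a b"
    proof (cases "0 \<in> closed_segment a b")
      case False then show ?thesis using KLC aF bF by blast
    next
      case True
      show ?thesis
      proof (cases "a = 0 \<or> b = 0")
        case True then show ?thesis unfolding tea_pair_def by auto
      next
        case False
        then have a0: "a \<noteq> 0" and b0: "b \<noteq> 0" by auto
        obtain t where t: "0 \<le> t" "t \<le> 1" "0 = (1 - t) *\<^sub>R a + t *\<^sub>R b"
          using True unfolding in_segment by blast
        have t0: "t \<noteq> 0" using t a0 by auto
        have t1: "t \<noteq> 1" using t b0 by auto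
        have tb: "t *\<^sub>R b = - ((1 - t) *\<^sub>R a)" using t(3) by (simp add: eq_neg_iff_add_eq_0 add.commute)
        have bsp: "b \<in> span {a}"
        proof -
          have "b = (1/t) *\<^sub>R (t *\<^sub>R b)" using t0 by simp
          also have "\<dots> = - (((1 - t) / t) *\<^sub>R a)" using tb by simp
          finally have beq: "b = - (((1 - t) / t) *\<^sub>R a)" .
          have "- (((1 - t) / t) *\<^sub>R a) \<in> span {a}" by (intro span_neg span_scale span_base) simp
          then show ?thesis using beq by simp
        qed
        have asp: "a \<in> span {a}" by (simp add: span_base)
        have spanF: "span F = UNIV" by (rule facet_span[OF fa pa F(1)])
        have "\<exists>w\<in>F. T w \<notin> span {a}"
        proof (rule ccontr)
          assume "\<not> (\<exists>w\<in>F. T w \<notin> span {a})"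
          then have "T ` F \<subseteq> span {a}" by blast
          then have "span (T ` F) \<subseteq> span {a}" by (metis span_mono span_span)
          moreover have "range T = span (T ` F)" using span_linear_image[OF lT, of F] spanF by simp
          ultimately have "range T \<subseteq> span {a}" by simp
          then have "dim (range T) \<le> card {a}" by (rule dim_le_card) simp
          also have "\<dots> \<le> 1" by simp
          finally show False using rk by simp
        qed
        then obtain w where w: "w \<in> F" "T w \<notin> span {a}" by blast
        define cc where "cc = T w"
        have ccF: "cc \<in> T ` F" using w cc_def by auto
        have cc: "cc \<notin> span {a}" using w cc_def by simp
        have tac: "tea_pair a cc" by (rule KLC[OF aF ccF not_zero_seg[OF asp a0 cc]])
        have tbc: "tea_pair b cc" by (rule KLC[OF bF ccF not_zero_seg[OF bsp b0 cc]])
        define m1 where "m1 = (1 - 1/2) *\<^sub>R a + (1/2) *\<^sub>R cc"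
        define m2 where "m2 = (1 - 1/2) *\<^sub>R b + (1/2) *\<^sub>R cc"
        have "m1 \<in> closed_segment a cc" unfolding m1_def in_segment
          by (intro exI[of _ "1/2::real"] conjI refl) auto
        then have m1F: "m1 \<in> T ` F" using closed_segment_subset[OF aF ccF cTF] by blast
        have "m2 \<in> closed_segment b cc" unfolding m2_def in_segment
          by (intro exI[of _ "1/2::real"] conjI refl) auto
        then have m2F: "m2 \<in> T ` F" using closed_segment_subset[OF bF ccF cTF] by blast
        have nz: "0 \<notin> closed_segment m1 m2"
        proof
          assume "0 \<in> closed_segment m1 m2"
          then obtain s where s: "0 = (1 - s) *\<^sub>R m1 + s *\<^sub>R m2" unfolding in_segment by blast
          have "(1 - s) *\<^sub>R m1 + s *\<^sub>R m2 = (1/2) *\<^sub>R ((1 - s) *\<^sub>R a + s *\<^sub>R b) + (1/2) *\<^sub>R cc"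
            unfolding m1_def m2_def by (rule mid_ident1)
          then have "(1/2::real) *\<^sub>R (((1 - s) *\<^sub>R a + s *\<^sub>R b) + cc) = 0"
            using s by (simp only: scaleR_add_right)
          then have "((1 - s) *\<^sub>R a + s *\<^sub>R b) + cc = 0" by simp
          then have "cc = - ((1 - s) *\<^sub>R a + s *\<^sub>R b)"
            by (metis add.commute eq_neg_iff_add_eq_0)
          moreover have "- ((1 - s) *\<^sub>R a + s *\<^sub>R b) \<in> span {a}"
            using asp bsp by (intro span_neg span_add span_scale)
          ultimately show False using cc by simp
        qed
        have tm: "tea_pair m1 m2" by (rule KLC[OF m1F m2F nz])
        have nm1: "norm m1 = (1/2) * (norm a + norm cc)"
        proof -
          have "tea_pair ((1/2) *\<^sub>R a) ((1/2) *\<^sub>R cc)" by (rule tea_scale[OF tac]) auto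
          then show ?thesis unfolding tea_pair_def m1_def by (simp add: algebra_simps)
        qed
        have nm2: "norm m2 = (1/2) * (norm b + norm cc)"
        proof -
          have "tea_pair ((1/2) *\<^sub>R b) ((1/2) *\<^sub>R cc)" by (rule tea_scale[OF tbc]) auto
          then show ?thesis unfolding tea_pair_def m2_def by (simp add: algebra_simps)
        qed
        have "m1 + m2 = (1/2) *\<^sub>R (a + b) + cc" unfolding m1_def m2_def by (rule mid_ident2)
        then have "norm (m1 + m2) \<le> (1/2) * norm (a + b) + norm cc"
          using norm_triangle_ineq[of "(1/2) *\<^sub>R (a + b)" cc] by simp
        moreover have "norm (a + b) < norm a + norm b"
        proof -
          have e1: "t *\<^sub>R (a + b) = (2 * t - 1) *\<^sub>R a"
          proof -
            have "t *\<^sub>R (a + b) = t *\<^sub>R a + t *\<^sub>R b" by (simp only: scaleR_add_right)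
            also have "\<dots> = t *\<^sub>R a - (1 - t) *\<^sub>R a" using tb by simp
            also have "\<dots> = (t - (1 - t)) *\<^sub>R a" by (simp only: scaleR_diff_left)
            also have "t - (1 - t) = 2 * t - 1" by simp
            finally show ?thesis .
          qed
          have "norm (t *\<^sub>R (a + b)) = norm ((2 * t - 1) *\<^sub>R a)" by (simp only: e1)
          then have n1: "t * norm (a + b) = \<bar>2 * t - 1\<bar> * norm a" using t(1) by simp
          have "norm (t *\<^sub>R b) = norm (- ((1 - t) *\<^sub>R a))" by (simp only: tb)
          then have n2: "t * norm b = (1 - t) * norm a" using t(1) t(2) by simp
          have lt1: "\<bar>2 * t - 1\<bar> < 1" using t t0 t1 by auto
          have "\<bar>2 * t - 1\<bar> * norm a < 1 * norm a"
            using a0 lt1 by (intro mult_strict_right_mono) auto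
          also have "1 * norm a = t * norm a + t * norm b" using n2 by (simp add: algebra_simps)
          finally have "t * norm (a + b) < t * (norm a + norm b)" using n1 by (simp add: algebra_simps)
          then show ?thesis using t(1) t0 by (simp add: mult_less_cancel_left)
        qed
        ultimately have "norm (m1 + m2) < norm m1 + norm m2" using nm1 nm2 by simp
        then show ?thesis using tm unfolding tea_pair_def by simp
      qed
    qed
    then show ?thesis using tea_normalize[OF lT x y] unfolding a_def b_def x'_def y'_def by blast
  qed
qed

theorem mainTheorem14:
  fixes T :: "'a::banach \<Rightarrow> 'b::banach"
  assumes "fin_dim_space TYPE('a)" and "fin_dim_space TYPE('b)"
    and "polyhedral_space TYPE('a)" and "polyhedral_space TYPE('b)"
    and "linear T"
    and "dim (range T) \<ge> 2"
  shows "((\<forall>x y. parallel_pair x y \<longrightarrow> parallel_pair (T x) (T y)) \<longleftrightarrow>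
          (\<forall>x y. tea_pair x y \<longrightarrow> tea_pair (T x) (T y)))
       \<and> ((\<forall>x y. tea_pair x y \<longrightarrow> tea_pair (T x) (T y)) \<longleftrightarrow>
          (\<forall>F. ball_facet F \<longrightarrow>
             (\<exists>u\<in>F. \<forall>v\<in>F - {v. T v = 0}. supp_J (T u) \<subseteq> supp_J (T v))))"
proof (intro conjI iffI)
  assume "\<forall>x y. parallel_pair x y \<longrightarrow> parallel_pair (T x) (T y)"
  then show "\<forall>x y. tea_pair x y \<longrightarrow> tea_pair (T x) (T y)"
    by (rule par_imp_tea[OF assms(1,2,3,5,6)])
next
  assume "\<forall>x y. tea_pair x y \<longrightarrow> tea_pair (T x) (T y)"
  then show "\<forall>x y. parallel_pair x y \<longrightarrow> parallel_pair (T x) (T y)"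
    by (rule tea_imp_par[OF assms(5)])
next
  assume "\<forall>x y. tea_pair x y \<longrightarrow> tea_pair (T x) (T y)"
  then show "\<forall>F. ball_facet F \<longrightarrow> (\<exists>u\<in>F. \<forall>v\<in>F - {v. T v = 0}. supp_J (T u) \<subseteq> supp_J (T v))"
    by (rule tea_imp_J[OF assms(1,5)])
next
  assume "\<forall>F. ball_facet F \<longrightarrow> (\<exists>u\<in>F. \<forall>v\<in>F - {v. T v = 0}. supp_J (T u) \<subseteq> supp_J (T v))"
  then show "\<forall>x y. tea_pair x y \<longrightarrow> tea_pair (T x) (T y)"
    by (rule J_imp_tea[OF assms(1,2,5)])
qed

end
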